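(* Let $p,d\ge1$ and $0\le r\le p$. For a $d$-tuple $\delta=(\sigma_1,\dots,\sigma_d)\in\mathbb P_p^d$ let $r(\delta)$ be the number of $s\in[p]$ such that $\{s\}$ is a block of every $\sigma_k$. Then $$\sum_{\delta=(\sigma_1,\dots,\sigma_d):\ \sigma_k>\dot0\ \forall k,\ r(\delta)=r}\ \prod_{k=1}^d|\mu(\dot0,\sigma_k)|\ \le\ \binom{p}{r}\,\big((p-r)!\big)^d.$$
   Context: $[p]=\{1,\dots,p\}$; $\mathbb P_p$ is the lattice of partitions of $[p]$ ordered by refinement, $\dot0$ the partition into singletons, $\sigma>\dot0$ means $\sigma\ne\dot0$. $\mu$ is the Möbius function of $\mathbb P_p$: $\mu(\rho,\rho)=1$ and $\sum_{\rho\le\tau\le\sigma}\mu(\rho,\tau)=0$ for $\rho<\sigma$. *)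

theory Defs
  imports Main "HOL-Library.Disjoint_Sets" "HOL-Library.FuncSet"
begin

definition Part :: "nat \<Rightarrow> nat set set set" where
  "Part p = {P. partition_on {1..p} P}"

definition zeroPart :: "nat \<Rightarrow> nat set set" where
  "zeroPart p = (\<lambda>s. {s}) ` {1..p}"

lemma finite_below: "finite {\<tau>. refines {1..(p::nat)} \<tau> \<sigma>}"
proof (rule finite_subset)
  show "{\<tau>. refines {1..p} \<tau> \<sigma>} \<subseteq> {P. partition_on {1..(p::nat)} P}"
    by (auto simp: refines_def)
  show "finite {P. partition_on {1..(p::nat)} P}"
    by (rule finitely_many_partition_on) simp
qed

function mobius :: "nat \<Rightarrow> nat set set \<Rightarrow> nat set set \<Rightarrow> int" where
  "mobius p \<rho> \<sigma> =
     (if \<rho> = \<sigma> then 1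
      else if refines {1..p} \<rho> \<sigma>
      then - (\<Sum>\<tau> \<in> {\<tau>. refines {1..p} \<rho> \<tau> \<and> refines {1..p} \<tau> \<sigma> \<and> \<tau> \<noteq> \<sigma>}. mobius p \<rho> \<tau>)
      else 0)"
  by auto
termination
proof (relation "measure (\<lambda>(p, \<rho>, \<sigma>). card {\<tau>. refines {1..p} \<tau> \<sigma>})", simp)
  fix p :: nat and \<rho> \<sigma> \<tau> :: "nat set set"
  assume t: "\<tau> \<in> {\<tau>. refines {1..p} \<rho> \<tau> \<and> refines {1..p} \<tau> \<sigma> \<and> \<tau> \<noteq> \<sigma>}"
  have "{\<tau>'. refines {1..p} \<tau>' \<tau>} \<subset> {\<tau>'. refines {1..p} \<tau>' \<sigma>}"
  proof
    show "{\<tau>'. refines {1..p} \<tau>' \<tau>} \<subseteq> {\<tau>'. refines {1..p} \<tau>' \<sigma>}"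
      using t refines_trans by blast
    have "refines {1..p} \<sigma> \<sigma>" using t unfolding refines_def by blast
    moreover have "\<not> refines {1..p} \<sigma> \<tau>" using t refines_asym by blast
    ultimately show "{\<tau>'. refines {1..p} \<tau>' \<tau>} \<noteq> {\<tau>'. refines {1..p} \<tau>' \<sigma>}" by blast
  qed
  then show "((p, \<rho>, \<tau>), p, \<rho>, \<sigma>) \<in> measure (\<lambda>(p, \<rho>, \<sigma>). card {\<tau>. refines {1..p} \<tau> \<sigma>})"
    using psubset_card_mono[OF finite_below] by simp
qed

declare mobius.simps [simp del]

definition rfix :: "nat \<Rightarrow> nat \<Rightarrow> (nat \<Rightarrow> nat set set) \<Rightarrow> nat" where
  "rfix p d \<delta> = card {s \<in> {1..p}. \<forall>k \<in> {1..d}. {s} \<in> \<delta> k}"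

end

theory Submission imports Defs begin

definition wt :: "(nat \<Rightarrow> int) \<Rightarrow> nat set set \<Rightarrow> int" where
  "wt h P = (\<Prod>C\<in>P. h (card C))"

lemma partition_on_Un:
  assumes "partition_on A1 P1" "partition_on A2 P2" "A1 \<inter> A2 = {}"
  shows "partition_on (A1 \<union> A2) (P1 \<union> P2)"
proof (rule partition_onI)
  show "\<Union>(P1 \<union> P2) = A1 \<union> A2" using assms(1,2) by (auto simp: partition_on_def)
  show "{} \<notin> P1 \<union> P2" using assms(1,2) by (auto simp: partition_on_def)
  fix a b assume ab: "a \<in> P1 \<union> P2" "b \<in> P1 \<union> P2" "a \<noteq> b"
  have s1: "a \<subseteq> A1" if "a \<in> P1" for a using that assms(1) by (auto simp: partition_on_def)
  have s2: "a \<subseteq> A2" if "a \<in> P2" for a using that assms(2) by (auto simp: partition_on_def)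
  have d1: "disjnt a b" if "a \<in> P1" "b \<in> P1" "a \<noteq> b" for a b
    using that assms(1) by (auto simp: partition_on_def disjoint_def disjnt_def)
  have d2: "disjnt a b" if "a \<in> P2" "b \<in> P2" "a \<noteq> b" for a b
    using that assms(2) by (auto simp: partition_on_def disjoint_def disjnt_def)
  show "disjnt a b"
  proof (cases "a \<in> P1")
    case True
    then show ?thesis
    proof (cases "b \<in> P1")
      case True with \<open>a \<in> P1\<close> ab d1 show ?thesis by blast
    next
      case False then have "b \<in> P2" using ab by blast
      then show ?thesis using s1[OF \<open>a \<in> P1\<close>] s2 assms(3) by (force simp: disjnt_def)
    qed
  next
    case False then have a2: "a \<in> P2" using ab by blast
    then show ?thesis
    proof (cases "b \<in> P1")
      case True
      then show ?thesis using s1[OF True] s2[OF a2] assms(3) by (force simp: disjnt_def)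
    next
      case False then have "b \<in> P2" using ab by blast
      then show ?thesis using a2 ab d2 by blast
    qed
  qed
qed

lemma partition_on_Diff_sub:
  assumes "partition_on A P" "P1 \<subseteq> P"
  shows "partition_on (A - \<Union>P1) (P - P1)"
proof -
  have "\<Union>P - \<Union>P1 = \<Union>(P - P1)"
    using assms by (intro diff_Union_pairwise_disjoint) (auto simp: partition_on_def)
  then show ?thesis using assms unfolding partition_on_def disjoint_def by auto
qed

lemma wt_Un:
  assumes "finite P" "finite Q" "P \<inter> Q = {}"
  shows "wt h (P \<union> Q) = wt h P * wt h Q"
  unfolding wt_def using assms by (simp add: prod.union_disjoint)

lemma wt_insert:
  assumes "finite Q" "C \<notin> Q"
  shows "wt h (insert C Q) = h (card C) * wt h Q"
  unfolding wt_def using assms by simp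

lemma split_block:
  fixes F :: "'a set set \<Rightarrow> int"
  assumes "finite B" "x \<in> B"
  shows "(\<Sum>P\<in>{P. partition_on B P}. F P) =
    (\<Sum>D\<in>Pow (B - {x}). \<Sum>Q\<in>{Q. partition_on (B - insert x D) Q}. F (insert (insert x D) Q))"
proof -
  let ?g = "\<lambda>(D, Q). insert (insert x D) Q"
  let ?S = "Sigma (Pow (B - {x})) (\<lambda>D. {Q. partition_on (B - insert x D) Q})"
  have inj: "inj_on ?g ?S"
  proof (rule inj_onI, clarsimp)
    fix D1 Q1 D2 Q2
    assume D1: "D1 \<subseteq> B - {x}" and Q1: "partition_on (B - insert x D1) Q1"
      and D2: "D2 \<subseteq> B - {x}" and Q2: "partition_on (B - insert x D2) Q2"
      and eq: "insert (insert x D1) Q1 = insert (insert x D2) Q2"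
    have n1: "x \<notin> \<Union>Q1" using Q1 by (auto simp: partition_on_def)
    have n2: "x \<notin> \<Union>Q2" using Q2 by (auto simp: partition_on_def)
    have "insert x D1 \<in> insert (insert x D2) Q2" using eq by (metis insertI1)
    moreover have "insert x D1 \<notin> Q2" using n2 by blast
    ultimately have "insert x D1 = insert x D2" by blast
    then have "D1 = D2" using D1 D2 by blast
    moreover have "insert x D1 \<notin> Q1" "insert x D2 \<notin> Q2" using n1 n2 by auto
    ultimately show "D1 = D2 \<and> Q1 = Q2"
      using eq insert_ident[of "insert x D1" Q1 Q2] by simp
  qed
  have img: "?g ` ?S = {P. partition_on B P}"
  proof (rule set_eqI, rule iffI)
    fix P assume "P \<in> ?g ` ?S"
    then obtain D Q where D: "D \<subseteq> B - {x}" and Q: "partition_on (B - insert x D) Q"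
      and P: "P = insert (insert x D) Q" by auto
    have "disjnt (insert x D) (\<Union>Q)" using Q by (auto simp: partition_on_def disjnt_def)
    then show "P \<in> {P. partition_on B P}"
      using P Q D assms by (auto simp add: partition_on_insert)
  next
    fix P assume "P \<in> {P. partition_on B P}"
    then have P: "partition_on B P" by simp
    then obtain C where C: "C \<in> P" "x \<in> C" using assms by (auto simp: partition_on_def)
    have CB: "C \<subseteq> B" using P C by (auto simp: partition_on_def)
    have "partition_on (B - \<Union>{C}) (P - {C})"
      using partition_on_Diff_sub[OF P, of "{C}"] C by simp
    moreover have "insert x (C - {x}) = C" using C by auto
    ultimately have "(C - {x}, P - {C}) \<in> ?S" using CB by auto
    moreover have "P = ?g (C - {x}, P - {C})" using C \<open>insert x (C - {x}) = C\<close> by (simp add: insert_absorb)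
    ultimately show "P \<in> ?g ` ?S" by blast
  qed
  have "(\<Sum>P\<in>{P. partition_on B P}. F P) = (\<Sum>z\<in>?S. F (?g z))"
    using sum.reindex[OF inj, of F] img by simp
  also have "\<dots> = (\<Sum>D\<in>Pow (B - {x}). \<Sum>Q\<in>{Q. partition_on (B - insert x D) Q}. F (insert (insert x D) Q))"
  proof (subst sum.Sigma)
    show "finite (Pow (B - {x}))" using assms by simp
    show "\<forall>D\<in>Pow (B - {x}). finite {Q. partition_on (B - insert x D) Q}"
      using assms by (auto intro: finitely_many_partition_on)
    show "(\<Sum>z\<in>?S. F (?g z)) = (\<Sum>(D, Q)\<in>?S. F (insert (insert x D) Q))"
      by (rule sum.cong) auto
  qed
  finally show ?thesis .
qed

lemma sum_pow_card:
  assumes "finite E"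
  shows "(\<Sum>D\<in>Pow E. (\<phi> (card D) :: int)) = (\<Sum>k=0..card E. of_nat (card E choose k) * \<phi> k)"
proof -
  have "(\<Sum>D\<in>Pow E. \<phi> (card D)) = (\<Sum>k\<in>{0..card E}. \<Sum>D\<in>{D. D \<in> Pow E \<and> card D = k}. \<phi> (card D))"
    by (rule sum.group[symmetric]) (auto simp: assms card_mono)
  also have "\<dots> = (\<Sum>k\<in>{0..card E}. of_nat (card E choose k) * \<phi> k)"
  proof (rule sum.cong[OF refl])
    fix k
    have "(\<Sum>D\<in>{D. D \<in> Pow E \<and> card D = k}. \<phi> (card D)) = (\<Sum>D\<in>{D. D \<subseteq> E \<and> card D = k}. \<phi> k)"
      by (rule sum.cong) auto
    also have "\<dots> = of_nat (card E choose k) * \<phi> k" using n_subsets[OF assms, of k] by simp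
    finally show "(\<Sum>D\<in>{D. D \<in> Pow E \<and> card D = k}. \<phi> (card D)) = of_nat (card E choose k) * \<phi> k" .
  qed
  finally show ?thesis .
qed

lemma recur:
  assumes IH: "\<And>B'. finite B' \<Longrightarrow> card B' < n \<Longrightarrow> (\<Sum>P\<in>{P. partition_on B' P}. wt h P) = F (card B')"
    and B: "finite B" "card B = n" "n \<ge> 1"
  shows "(\<Sum>P\<in>{P. partition_on B P}. wt h P) = (\<Sum>k=0..n-1. of_nat ((n-1) choose k) * (h (k+1) * F (n-1-k)))"
proof -
  obtain x where x: "x \<in> B" using B by fastforce
  have cE: "card (B - {x}) = n - 1" using B x by simp
  have "(\<Sum>P\<in>{P. partition_on B P}. wt h P) =
    (\<Sum>D\<in>Pow (B - {x}). \<Sum>Q\<in>{Q. partition_on (B - insert x D) Q}. wt h (insert (insert x D) Q))"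
    by (rule split_block[OF B(1) x])
  also have "\<dots> = (\<Sum>D\<in>Pow (B - {x}). h (card D + 1) * F (n - 1 - card D))"
  proof (rule sum.cong[OF refl])
    fix D assume D: "D \<in> Pow (B - {x})"
    have fD: "finite D" using D B(1) finite_subset by auto
    have xD: "x \<notin> D" using D by auto
    have cD: "card (insert x D) = card D + 1" using xD fD by simp
    have cR: "card (B - insert x D) = n - 1 - card D"
      using D B fD x cD by (subst card_Diff_subset) auto
    have "(\<Sum>Q\<in>{Q. partition_on (B - insert x D) Q}. wt h (insert (insert x D) Q))
       = (\<Sum>Q\<in>{Q. partition_on (B - insert x D) Q}. h (card D + 1) * wt h Q)"
    proof (rule sum.cong[OF refl])
      fix Q assume Q: "Q \<in> {Q. partition_on (B - insert x D) Q}"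
      have "finite Q" using Q B(1) finite_elements by auto
      moreover have "insert x D \<notin> Q" using Q by (auto simp: partition_on_def)
      ultimately show "wt h (insert (insert x D) Q) = h (card D + 1) * wt h Q"
        using wt_insert cD by metis
    qed
    also have "\<dots> = h (card D + 1) * F (n - 1 - card D)"
    proof -
      have lt: "card (B - insert x D) < n" using cR B by simp
      have IHD: "(\<Sum>Q\<in>{Q. partition_on (B - insert x D) Q}. wt h Q) = F (n - 1 - card D)"
        using IH[OF _ lt] B(1) cR by simp
      show ?thesis by (simp add: sum_distrib_left[symmetric] IHD)
    qed
    finally show "(\<Sum>Q\<in>{Q. partition_on (B - insert x D) Q}. wt h (insert (insert x D) Q))
       = h (card D + 1) * F (n - 1 - card D)" .
  qed
  also have "\<dots> = (\<Sum>k=0..n-1. of_nat ((n-1) choose k) * (h (k+1) * F (n-1-k)))"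
    using sum_pow_card[of "B - {x}" "\<lambda>k. h (k + 1) * F (n - 1 - k)"] B cE by simp
  finally show ?thesis .
qed


lemma parts_empty: "{P. partition_on {} P} = {{}}"
  by (auto simp: partition_on_empty)

lemma wt_empty[simp]: "wt h {} = 1" by (simp add: wt_def)

definition hW :: "nat \<Rightarrow> int" where "hW k = fact (k - 1)"
definition hw :: "nat \<Rightarrow> int" where "hw k = (-1) ^ (k - 1) * fact (k - 1)"

lemma binom_fact_int: "k \<le> m \<Longrightarrow> (of_nat (m choose k) * (fact k * fact (m - k)) :: int) = fact m"
proof -
  assume "k \<le> m"
  then have "int (fact k * fact (m - k) * (m choose k)) = int (fact m)"
    using binomial_fact_lemma by metis
  then show ?thesis by (simp add: algebra_simps)
qed

lemma sum_hW: "finite B \<Longrightarrow> (\<Sum>P\<in>{P. partition_on B P}. wt hW P) = fact (card B)"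
proof (induction "card B" arbitrary: B rule: less_induct)
  case less
  show ?case
  proof (cases "card B = 0")
    case True
    then have "B = {}" using less.prems by simp
    then show ?thesis by (simp add: parts_empty)
  next
    case False
    let ?n = "card B"
    have "(\<Sum>P\<in>{P. partition_on B P}. wt hW P) =
      (\<Sum>k=0..?n-1. of_nat ((?n-1) choose k) * (hW (k+1) * fact (?n-1-k)))"
      using False by (intro recur[where F = fact]) (use less in \<open>auto simp: Suc_le_eq card_gt_0_iff\<close>)
    also have "\<dots> = (\<Sum>k=0..?n-1. (fact (?n - 1) :: int))"
    proof (rule sum.cong[OF refl])
      fix k assume "k \<in> {0..?n-1}"
      then have "k \<le> ?n - 1" by simp
      then show "of_nat ((?n-1) choose k) * (hW (k+1) * fact (?n-1-k)) = (fact (?n - 1) :: int)"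
        using binom_fact_int[of k "?n - 1"] by (simp add: hW_def)
    qed
    also have "\<dots> = fact ?n" using False
      by (simp add: fact_reduce[of ?n])
    finally show ?thesis .
  qed
qed

definition F1 :: "nat \<Rightarrow> int" where "F1 j = (if j \<le> 1 then 1 else 0)"

lemma sum_hw: "finite B \<Longrightarrow> (\<Sum>P\<in>{P. partition_on B P}. wt hw P) = F1 (card B)"
proof (induction "card B" arbitrary: B rule: less_induct)
  case less
  show ?case
  proof (cases "card B = 0")
    case True
    then have "B = {}" using less.prems by simp
    then show ?thesis by (simp add: parts_empty F1_def)
  next
    case False
    define m where "m = card B - 1"
    have cB: "card B = Suc m" using False m_def by simp
    have "(\<Sum>P\<in>{P. partition_on B P}. wt hw P) =
      (\<Sum>k=0..card B-1. of_nat ((card B-1) choose k) * (hw (k+1) * F1 (card B-1-k)))"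
      using False by (intro recur[where F = F1]) (use less in \<open>auto simp: Suc_le_eq card_gt_0_iff\<close>)
    also have "\<dots> = (\<Sum>k=0..m. of_nat (m choose k) * (hw (k+1) * F1 (m-k)))"
      by (simp add: m_def)
    also have "\<dots> = F1 (Suc m)"
    proof (cases m)
      case 0
      then show ?thesis by (simp add: hw_def F1_def)
    next
      case (Suc j)
      show ?thesis
      proof (cases j)
        case 0
        then show ?thesis using Suc by (simp add: hw_def F1_def)
      next
        case (Suc i)
        have z: "(\<Sum>k=0..i. of_nat (m choose k) * (hw (k+1) * F1 (m-k))) = 0"
          by (rule sum.neutral) (use \<open>m = Suc j\<close> Suc in \<open>auto simp: F1_def\<close>)
        have "(\<Sum>k=0..m. of_nat (m choose k) * (hw (k+1) * F1 (m-k))) =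
           (\<Sum>k=0..i. of_nat (m choose k) * (hw (k+1) * F1 (m-k)))
           + of_nat (m choose Suc i) * (hw (Suc i+1) * F1 (m-Suc i))
           + of_nat (m choose Suc (Suc i)) * (hw (Suc (Suc i)+1) * F1 (m-Suc (Suc i)))"
          using \<open>m = Suc j\<close> Suc by simp
        also have "\<dots> = 0"
          using \<open>m = Suc j\<close> Suc z by (simp add: hw_def F1_def binomial_Suc_n algebra_simps)
        finally show ?thesis using \<open>m = Suc j\<close> Suc by (simp add: F1_def)
      qed
    qed
    finally show ?thesis using cB by simp
  qed
qed


lemma zero_refines:
  assumes "partition_on A \<sigma>"
  shows "refines A ((\<lambda>s. {s}) ` A) \<sigma>"
  unfolding refines_def using assms partition_on_singletons[of A]
  by (auto simp: partition_on_def)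

lemma exists_big_block:
  assumes "partition_on A \<sigma>" "\<sigma> \<noteq> (\<lambda>s. {s}) ` A" "finite A"
  obtains B where "B \<in> \<sigma>" "card B \<ge> 2"
proof -
  have "\<exists>B\<in>\<sigma>. card B \<ge> 2"
  proof (rule ccontr)
    assume "\<not> ?thesis"
    then have le: "\<And>B. B \<in> \<sigma> \<Longrightarrow> card B \<le> 1" by force
    have sing: "\<exists>s. B = {s}" if "B \<in> \<sigma>" for B
    proof -
      have "B \<noteq> {}" "finite B" using that assms by (auto simp: partition_on_def intro: finite_subset)
      then have "card B = 1" using le[OF that] by (simp add: Suc_le_eq card_gt_0_iff le_antisym)
      then show ?thesis by (simp add: card_1_singleton_iff)
    qed
    have "\<sigma> = (\<lambda>s. {s}) ` A"
    proof (rule set_eqI, rule iffI)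
      fix B assume "B \<in> \<sigma>"
      then obtain s where "B = {s}" using sing by blast
      then show "B \<in> (\<lambda>s. {s}) ` A" using \<open>B \<in> \<sigma>\<close> assms(1) by (auto simp: partition_on_def)
    next
      fix B assume "B \<in> (\<lambda>s. {s}) ` A"
      then obtain s where s: "s \<in> A" "B = {s}" by blast
      then obtain Y where "Y \<in> \<sigma>" "s \<in> Y" using assms(1) by (auto simp: partition_on_def)
      then obtain t where "Y = {t}" using sing by blast
      then show "B \<in> \<sigma>" using s \<open>Y \<in> \<sigma>\<close> \<open>s \<in> Y\<close> by simp
    qed
    then show False using assms(2) by blast
  qed
  then show ?thesis using that by blast
qed

lemma finite_refines: "finite A \<Longrightarrow> finite {\<tau>. refines A \<tau> \<sigma>}"
  by (rule finite_subset[OF _ finitely_many_partition_on[of A]]) (auto simp: refines_def)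

lemma key_zero:
  assumes fin: "finite A" and sig: "partition_on A \<sigma>" and nz: "\<sigma> \<noteq> (\<lambda>s. {s}) ` A"
  shows "(\<Sum>\<tau>\<in>{\<tau>. refines A \<tau> \<sigma>}. wt hw \<tau>) = 0"
proof -
  obtain B where B: "B \<in> \<sigma>" "card B \<ge> 2" using exists_big_block[OF sig nz fin] by blast
  have BA: "B \<subseteq> A" using B sig by (auto simp: partition_on_def)
  have fB: "finite B" using BA fin finite_subset by auto
  define \<sigma>' where "\<sigma>' = \<sigma> - {B}"
  define A' where "A' = A - B"
  have sig': "partition_on A' \<sigma>'"
    using partition_on_Diff_sub[OF sig, of "{B}"] B unfolding \<sigma>'_def A'_def by simp
  have fA': "finite A'" using fin A'_def by simp
  let ?S = "{t1. partition_on B t1} \<times> {t2. refines A' t2 \<sigma>'}"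
  let ?g = "\<lambda>(t1, t2). t1 \<union> t2"
  have char1: "t1 = {b \<in> t1 \<union> t2. b \<subseteq> B}" and char2: "t2 = {b \<in> t1 \<union> t2. \<not> b \<subseteq> B}"
    if "(t1, t2) \<in> ?S" for t1 t2
  proof -
    have h1: "b \<subseteq> B" if "b \<in> t1" for b using \<open>(t1, t2) \<in> ?S\<close> that by (auto simp: partition_on_def)
    have h2: "b \<subseteq> A'" "b \<noteq> {}" if "b \<in> t2" for b
      using \<open>(t1, t2) \<in> ?S\<close> that by (auto simp: partition_on_def refines_def)
    have h3: "\<not> b \<subseteq> B" if "b \<in> t2" for b using h2[OF that] unfolding A'_def by blast
    show "t1 = {b \<in> t1 \<union> t2. b \<subseteq> B}" using h1 h3 by blast
    show "t2 = {b \<in> t1 \<union> t2. \<not> b \<subseteq> B}" using h1 h3 by blast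
  qed
  have inj: "inj_on ?g ?S"
  proof (rule inj_onI)
    fix u v assume u: "u \<in> ?S" and v: "v \<in> ?S" and eq: "?g u = ?g v"
    obtain t1 t2 where [simp]: "u = (t1, t2)" by (cases u)
    obtain s1 s2 where [simp]: "v = (s1, s2)" by (cases v)
    have c: "t1 \<union> t2 = s1 \<union> s2" using eq by simp
    have a1: "t1 = {b \<in> t1 \<union> t2. b \<subseteq> B}" by (rule char1) (use u in simp)
    have b1: "s1 = {b \<in> s1 \<union> s2. b \<subseteq> B}" by (rule char1) (use v in simp)
    have a2: "t2 = {b \<in> t1 \<union> t2. \<not> b \<subseteq> B}" by (rule char2) (use u in simp)
    have b2: "s2 = {b \<in> s1 \<union> s2. \<not> b \<subseteq> B}" by (rule char2) (use v in simp)
    from a1 have "t1 = {b \<in> s1 \<union> s2. b \<subseteq> B}" unfolding c .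
    then have "t1 = s1" using b1 by (rule trans[OF _ sym])
    moreover from a2 have "t2 = {b \<in> s1 \<union> s2. \<not> b \<subseteq> B}" unfolding c .
    then have "t2 = s2" using b2 by (rule trans[OF _ sym])
    ultimately show "u = v" by simp
  qed
  have img: "?g ` ?S = {\<tau>. refines A \<tau> \<sigma>}"
  proof (rule set_eqI, rule iffI)
    fix \<tau> assume "\<tau> \<in> ?g ` ?S"
    then obtain t1 t2 where t1: "partition_on B t1" and t2: "refines A' t2 \<sigma>'" and tau: "\<tau> = t1 \<union> t2"
      by auto
    have p2': "partition_on A' t2" using t2 by (simp add: refines_def)
    have BA': "B \<inter> A' = {}" using A'_def by auto
    have "partition_on (B \<union> A') (t1 \<union> t2)"
      by (rule partition_on_Un[OF t1 p2' BA'])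
    moreover have "B \<union> A' = A" using BA A'_def by auto
    moreover have "\<forall>X\<in>t1 \<union> t2. \<exists>Y\<in>\<sigma>. X \<subseteq> Y"
    proof
      fix X assume "X \<in> t1 \<union> t2"
      then show "\<exists>Y\<in>\<sigma>. X \<subseteq> Y"
      proof
        assume "X \<in> t1"
        then have "X \<subseteq> B" using t1 by (auto simp: partition_on_def)
        then show ?thesis using B(1) by blast
      next
        assume "X \<in> t2"
        then obtain Y where "Y \<in> \<sigma>'" "X \<subseteq> Y" using t2 by (auto simp: refines_def)
        then show ?thesis unfolding \<sigma>'_def by blast
      qed
    qed
    ultimately show "\<tau> \<in> {\<tau>. refines A \<tau> \<sigma>}" using tau sig by (simp add: refines_def)
  next
    fix \<tau> assume "\<tau> \<in> {\<tau>. refines A \<tau> \<sigma>}"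
    then have ref: "refines A \<tau> \<sigma>" by simp
    define t1 where "t1 = {b \<in> \<tau>. b \<subseteq> B}"
    have t1: "partition_on B t1" using refines_obtains_subset[OF ref B(1)] t1_def by simp
    have tau: "partition_on A \<tau>" using ref by (simp add: refines_def)
    have U1: "\<Union>t1 = B" using t1 by (simp add: partition_on_def)
    have "partition_on (A - \<Union>t1) (\<tau> - t1)" by (rule partition_on_Diff_sub[OF tau]) (auto simp: t1_def)
    then have p2: "partition_on A' (\<tau> - t1)" using U1 A'_def by simp
    have "\<forall>X\<in>\<tau> - t1. \<exists>Y\<in>\<sigma>'. X \<subseteq> Y"
    proof
      fix X assume X: "X \<in> \<tau> - t1"
      then obtain Y where Y: "Y \<in> \<sigma>" "X \<subseteq> Y" using ref by (auto simp: refines_def)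
      have "Y \<noteq> B" using X Y t1_def by auto
      then show "\<exists>Y\<in>\<sigma>'. X \<subseteq> Y" using Y \<sigma>'_def by auto
    qed
    then have "refines A' (\<tau> - t1) \<sigma>'" using p2 sig' by (simp add: refines_def)
    moreover have "\<tau> = t1 \<union> (\<tau> - t1)" using t1_def by auto
    ultimately show "\<tau> \<in> ?g ` ?S" using t1 by (intro image_eqI[of _ _ "(t1, \<tau> - t1)"]) auto
  qed
  have "(\<Sum>\<tau>\<in>{\<tau>. refines A \<tau> \<sigma>}. wt hw \<tau>) = (\<Sum>u\<in>?S. wt hw (?g u))"
    using sum.reindex[OF inj, of "wt hw"] img by simp
  also have "\<dots> = (\<Sum>u\<in>?S. wt hw (fst u) * wt hw (snd u))"
  proof (rule sum.cong[OF refl])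
    fix u assume u: "u \<in> ?S"
    obtain t1 t2 where [simp]: "u = (t1, t2)" by (cases u)
    have "finite t1" using u fB finite_elements by auto
    moreover have "finite t2" using u fA' finite_elements by (auto simp: refines_def)
    moreover have "t1 \<inter> t2 = {}"
    proof -
      have h1: "b \<subseteq> B" if "b \<in> t1" for b using u that by (auto simp: partition_on_def)
      have h2: "b \<subseteq> A'" "b \<noteq> {}" if "b \<in> t2" for b
        using u that by (auto simp: partition_on_def refines_def)
      show ?thesis using h1 h2 unfolding A'_def by blast
    qed
    ultimately show "wt hw (?g u) = wt hw (fst u) * wt hw (snd u)" by (simp add: wt_Un)
  qed
  also have "\<dots> = (\<Sum>t1\<in>{t1. partition_on B t1}. wt hw t1) * (\<Sum>t2\<in>{t2. refines A' t2 \<sigma>'}. wt hw t2)"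
    by (simp add: sum_product sum.cartesian_product split_def)
  also have "(\<Sum>t1\<in>{t1. partition_on B t1}. wt hw t1) = 0"
    using sum_hw[OF fB] B by (simp add: F1_def)
  finally show ?thesis by simp
qed

lemma mobius_eq:
  assumes "\<sigma> \<in> Part p"
  shows "mobius p (zeroPart p) \<sigma> = wt hw \<sigma>"
  using assms
proof (induction "card {\<tau>. refines {1..p} \<tau> \<sigma>}" arbitrary: \<sigma> rule: less_induct)
  case less
  let ?A = "{1..p}"
  let ?z = "zeroPart p"
  have sig: "partition_on ?A \<sigma>" using less.prems by (simp add: Part_def)
  show ?case
  proof (cases "\<sigma> = ?z")
    case True
    have "wt hw ?z = 1" unfolding wt_def zeroPart_def
      by (subst prod.reindex) (auto simp: inj_on_def hw_def)
    then show ?thesis using True by (simp add: mobius.simps)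
  next
    case False
    define I where "I = {\<tau>. refines ?A ?z \<tau> \<and> refines ?A \<tau> \<sigma> \<and> \<tau> \<noteq> \<sigma>}"
    have zr: "refines ?A ?z \<sigma>" using zero_refines[OF sig] by (simp add: zeroPart_def)
    have "mobius p ?z \<sigma> = - (\<Sum>\<tau>\<in>I. mobius p ?z \<tau>)"
      using False zr by (subst mobius.simps) (simp add: I_def)
    also have "(\<Sum>\<tau>\<in>I. mobius p ?z \<tau>) = (\<Sum>\<tau>\<in>I. wt hw \<tau>)"
    proof (rule sum.cong[OF refl])
      fix \<tau> assume t: "\<tau> \<in> I"
      have "{\<tau>'. refines ?A \<tau>' \<tau>} \<subset> {\<tau>'. refines ?A \<tau>' \<sigma>}"
      proof
        show "{\<tau>'. refines ?A \<tau>' \<tau>} \<subseteq> {\<tau>'. refines ?A \<tau>' \<sigma>}"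
          using t refines_trans unfolding I_def by blast
        have "refines ?A \<sigma> \<sigma>" using sig by (rule refines_refl)
        moreover have "\<not> refines ?A \<sigma> \<tau>" using t refines_asym unfolding I_def by blast
        ultimately show "{\<tau>'. refines ?A \<tau>' \<tau>} \<noteq> {\<tau>'. refines ?A \<tau>' \<sigma>}" by blast
      qed
      then have "card {\<tau>'. refines ?A \<tau>' \<tau>} < card {\<tau>'. refines ?A \<tau>' \<sigma>}"
        using psubset_card_mono[OF finite_below] by blast
      moreover have "\<tau> \<in> Part p" using t by (simp add: I_def Part_def refines_def)
      ultimately show "mobius p ?z \<tau> = wt hw \<tau>" using less.hyps by blast
    qed
    also have "(\<Sum>\<tau>\<in>I. wt hw \<tau>) = - wt hw \<sigma>"
    proof -
      have eq: "{\<tau>. refines ?A \<tau> \<sigma>} = insert \<sigma> I"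
        using zero_refines sig refines_refl unfolding I_def zeroPart_def refines_def by auto
      have fI: "finite I" using finite_refines[of ?A \<sigma>] eq by simp
      have "(\<Sum>\<tau>\<in>{\<tau>. refines ?A \<tau> \<sigma>}. wt hw \<tau>) = 0"
        using key_zero[of ?A \<sigma>] sig False by (simp add: zeroPart_def)
      then have "wt hw \<sigma> + (\<Sum>\<tau>\<in>I. wt hw \<tau>) = 0"
        using eq fI by (simp add: I_def)
      then show ?thesis by simp
    qed
    finally show ?thesis by simp
  qed
qed

lemma abs_prod_int: "\<bar>\<Prod>x\<in>A. (f x :: int)\<bar> = (\<Prod>x\<in>A. \<bar>f x\<bar>)"
  by (induction A rule: infinite_finite_induct) (auto simp: abs_mult)

lemma abs_mobius:
  assumes "\<sigma> \<in> Part p"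
  shows "\<bar>mobius p (zeroPart p) \<sigma>\<bar> = wt hW \<sigma>"
  using mobius_eq[OF assms] unfolding wt_def
  by (simp add: abs_prod_int hw_def hW_def abs_mult)


lemma finite_Part: "finite (Part p)"
  unfolding Part_def by (rule finitely_many_partition_on) simp

lemma sum_T:
  assumes S: "S \<subseteq> {1..p}"
  shows "(\<Sum>\<sigma>\<in>{\<sigma> \<in> Part p. \<forall>s\<in>S. {s} \<in> \<sigma>}. wt hW \<sigma>) = fact (p - card S)"
proof -
  let ?A = "{1..p::nat}"
  let ?sg = "(\<lambda>s. {s}) ` S"
  let ?g = "\<lambda>Q. Q \<union> ?sg"
  let ?Q = "{Q. partition_on (?A - S) Q}"
  have fS: "finite S" using S finite_subset by auto
  have disj: "Q \<inter> ?sg = {}" if "Q \<in> ?Q" for Q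
    using that by (auto simp: partition_on_def)
  have inj: "inj_on ?g ?Q"
  proof (rule inj_onI)
    fix Q1 Q2 assume "Q1 \<in> ?Q" "Q2 \<in> ?Q" "?g Q1 = ?g Q2"
    then have "?g Q1 - ?sg = ?g Q2 - ?sg" by simp
    then show "Q1 = Q2" using disj[OF \<open>Q1 \<in> ?Q\<close>] disj[OF \<open>Q2 \<in> ?Q\<close>] by blast
  qed
  have img: "?g ` ?Q = {\<sigma> \<in> Part p. \<forall>s\<in>S. {s} \<in> \<sigma>}"
  proof (rule set_eqI, rule iffI)
    fix \<sigma> assume "\<sigma> \<in> ?g ` ?Q"
    then obtain Q where Q: "partition_on (?A - S) Q" and sig: "\<sigma> = Q \<union> ?sg" by auto
    have "partition_on ((?A - S) \<union> S) (Q \<union> ?sg)"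
      by (rule partition_on_Un[OF Q partition_on_singletons]) auto
    moreover have "(?A - S) \<union> S = ?A" using S by auto
    ultimately show "\<sigma> \<in> {\<sigma> \<in> Part p. \<forall>s\<in>S. {s} \<in> \<sigma>}" using sig by (simp add: Part_def)
  next
    fix \<sigma> assume "\<sigma> \<in> {\<sigma> \<in> Part p. \<forall>s\<in>S. {s} \<in> \<sigma>}"
    then have sig: "partition_on ?A \<sigma>" and sub: "?sg \<subseteq> \<sigma>" by (auto simp: Part_def)
    have "partition_on (?A - \<Union>?sg) (\<sigma> - ?sg)" by (rule partition_on_Diff_sub[OF sig sub])
    moreover have "\<Union>?sg = S" by auto
    ultimately have "\<sigma> - ?sg \<in> ?Q" by simp
    moreover have "\<sigma> = ?g (\<sigma> - ?sg)" using sub by auto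
    ultimately show "\<sigma> \<in> ?g ` ?Q" by blast
  qed
  have wsg: "wt hW ?sg = 1" unfolding wt_def
    by (subst prod.reindex) (auto simp: inj_on_def hW_def)
  have "(\<Sum>\<sigma>\<in>{\<sigma> \<in> Part p. \<forall>s\<in>S. {s} \<in> \<sigma>}. wt hW \<sigma>) = (\<Sum>Q\<in>?Q. wt hW (?g Q))"
    using sum.reindex[OF inj, of "wt hW"] img by simp
  also have "\<dots> = (\<Sum>Q\<in>?Q. wt hW Q)"
  proof (rule sum.cong[OF refl])
    fix Q assume Q: "Q \<in> ?Q"
    have "finite Q" using Q finite_elements by auto
    then show "wt hW (?g Q) = wt hW Q" using wt_Un[of Q ?sg hW] disj[OF Q] fS wsg by simp
  qed
  also have "\<dots> = fact (card (?A - S))" by (rule sum_hW) simp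
  also have "card (?A - S) = p - card S" using S fS by (simp add: card_Diff_subset)
  finally show ?thesis .
qed

theorem mainTheorem7:
  fixes p d r :: nat
  assumes "p \<ge> 1" and "d \<ge> 1" and "r \<le> p"
  shows "(\<Sum>\<delta> \<in> {\<delta> \<in> ({1..d} \<rightarrow>\<^sub>E Part p).
              (\<forall>k \<in> {1..d}. \<delta> k \<noteq> zeroPart p) \<and> rfix p d \<delta> = r}.
            \<Prod>k = 1..d. \<bar>mobius p (zeroPart p) (\<delta> k)\<bar>)
         \<le> int (p choose r) * (int (fact (p - r))) ^ d"
proof -
  let ?A = "{1..p::nat}"
  let ?I = "{1..d::nat}"
  let ?X = "{\<delta> \<in> (?I \<rightarrow>\<^sub>E Part p). (\<forall>k \<in> ?I. \<delta> k \<noteq> zeroPart p) \<and> rfix p d \<delta> = r}"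
  let ?f = "\<lambda>\<delta>. \<Prod>k = 1..d. \<bar>mobius p (zeroPart p) (\<delta> k)\<bar>"
  let ?fix = "\<lambda>\<delta>. {s \<in> ?A. \<forall>k \<in> ?I. {s} \<in> \<delta> k}"
  let ?SS = "{S. S \<subseteq> ?A \<and> card S = r}"
  let ?T = "\<lambda>S. {\<sigma> \<in> Part p. \<forall>s\<in>S. {s} \<in> \<sigma>}"
  have fPiE: "finite (?I \<rightarrow>\<^sub>E Part p)" by (simp add: finite_PiE finite_Part)
  have fX: "finite ?X" by (rule finite_subset[OF _ fPiE]) auto
  have fSS: "finite ?SS" by (rule finite_subset[of _ "Pow ?A"]) auto
  have "(\<Sum>\<delta>\<in>?X. ?f \<delta>) = (\<Sum>S\<in>?SS. \<Sum>\<delta>\<in>{\<delta>. \<delta> \<in> ?X \<and> ?fix \<delta> = S}. ?f \<delta>)"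
    by (rule sum.group[symmetric, OF fX fSS]) (auto simp: rfix_def)
  also have "\<dots> \<le> (\<Sum>S\<in>?SS. \<Sum>\<delta>\<in>(?I \<rightarrow>\<^sub>E ?T S). ?f \<delta>)"
  proof (rule sum_mono)
    fix S assume "S \<in> ?SS"
    show "(\<Sum>\<delta>\<in>{\<delta>. \<delta> \<in> ?X \<and> ?fix \<delta> = S}. ?f \<delta>) \<le> (\<Sum>\<delta>\<in>(?I \<rightarrow>\<^sub>E ?T S). ?f \<delta>)"
    proof (rule sum_mono2)
      show "finite (?I \<rightarrow>\<^sub>E ?T S)" by (rule finite_PiE) (auto intro: finite_subset[OF _ finite_Part])
      show "{\<delta>. \<delta> \<in> ?X \<and> ?fix \<delta> = S} \<subseteq> ?I \<rightarrow>\<^sub>E ?T S"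
      proof (rule subsetI)
        fix \<delta> assume h: "\<delta> \<in> {\<delta>. \<delta> \<in> ?X \<and> ?fix \<delta> = S}"
        then have hP: "\<delta> \<in> ?I \<rightarrow>\<^sub>E Part p" and hS: "?fix \<delta> = S" by auto
        show "\<delta> \<in> ?I \<rightarrow>\<^sub>E ?T S"
        proof (rule PiE_I)
          fix k assume k: "k \<in> ?I"
          have "\<delta> k \<in> Part p" using PiE_mem[OF hP k] .
          moreover have "\<forall>s\<in>S. {s} \<in> \<delta> k" using hS k by blast
          ultimately show "\<delta> k \<in> ?T S" by simp
        next
          fix k assume "k \<notin> ?I"
          then show "\<delta> k = undefined" using PiE_arb[OF hP] by simp
        qed
      qed
      show "0 \<le> ?f \<delta>" for \<delta> by (rule prod_nonneg) simp
    qed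
  qed
  also have "\<dots> = (\<Sum>S\<in>?SS. (int (fact (p - r))) ^ d)"
  proof (rule sum.cong[OF refl])
    fix S assume S: "S \<in> ?SS"
    have "(\<Sum>\<delta>\<in>(?I \<rightarrow>\<^sub>E ?T S). ?f \<delta>) = (\<Prod>k\<in>?I. \<Sum>\<sigma>\<in>?T S. \<bar>mobius p (zeroPart p) \<sigma>\<bar>)"
      by (rule prod_sum_PiE[symmetric]) (auto intro: finite_subset[OF _ finite_Part])
    also have "\<dots> = (\<Prod>k\<in>?I. \<Sum>\<sigma>\<in>?T S. wt hW \<sigma>)"
      by (intro prod.cong sum.cong refl) (simp add: abs_mobius)
    also have "\<dots> = (\<Prod>k\<in>?I. (fact (p - r) :: int))"
      using sum_T[of S p] S by simp
    also have "\<dots> = (int (fact (p - r))) ^ d" by simp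
    finally show "(\<Sum>\<delta>\<in>(?I \<rightarrow>\<^sub>E ?T S). ?f \<delta>) = (int (fact (p - r))) ^ d" .
  qed
  also have "\<dots> = int (p choose r) * (int (fact (p - r))) ^ d"
    using n_subsets[of ?A r] by simp
  finally show ?thesis .
qed

end
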